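(* Let $\alpha_1\in(0,1)$, $\rho_1,\rho_2>0$, $u_1,u_2$ be smooth functions of $(t,x)$, and let $\zeta_1,\dots,\zeta_5$ be given functions. Set \[ u_I=u,\qquad p_I=\frac{\alpha_2\rho_2p_1+\alpha_1\rho_1p_2}{\rho}. \] Then $(\alpha_1,\rho_1,\rho_2,u_1,u_2)$ solves the barotropic Baer–Nunziato system \begin{align*} &\partial_t\alpha_1+u_I\partial_x\alpha_1=\zeta_1,\quad \partial_t(\alpha_1\rho_1)+\partial_x(\alpha_1\rho_1u_1)=\zeta_2,\quad \partial_t(\alpha_2\rho_2)+\partial_x(\alpha_2\rho_2u_2)=\zeta_3,\\ &\partial_t(\alpha_1\rho_1u_1)+\partial_x(\alpha_1\rho_1u_1^2+\alpha_1p_1)-p_I\partial_x\alpha_1=\zeta_4,\quad \partial_t(\alpha_2\rho_2u_2)+\partial_x(\alpha_2\rho_2u_2^2+\alpha_2p_2)-p_I\partial_x\alpha_2=\zeta_5 \end{align*} if and only if it solves the conservative SHTC system \begin{align*} &\partial_t(\alpha_1\rho)+\partial_x(\alpha_1\rho u)=\xi_1,\quad \partial_t(\alpha_1\rho_1)+\partial_x(\alpha_1\rho_1u_1)=\xi_2,\quad \partial_t\rho+\partial_x(\rho u)=\xi_3,\\ &\partial_t(\alpha_1\rho_1u_1+\alpha_2\rho_2u_2)+\partial_x(\alpha_1\rho_1u_1^2+\alpha_2\rho_2u_2^2+\alpha_1p_1+\alpha_2p_2)=\xi_4,\\ &\partial_t(u_1-u_2)+\partial_x\Big(\tfrac12u_1^2-\tfrac12u_2^2+\Psi_1(\rho_1)-\Psi_2(\rho_2)\Big)=\xi_5,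 \end{align*} with $\xi=B\zeta$, where \[ B=\begin{pmatrix} \rho & \alpha_1 & \alpha_1 & 0 & 0\\ 0 & 1 & 0 & 0 & 0\\ 0 & 1 & 1 & 0 & 0\\ 0 & 0 & 0 & 1 & 1\\ 0 & -\frac{u_1}{\alpha_1\rho_1} & \frac{u_2}{\alpha_2\rho_2} & \frac{1}{\alpha_1\rho_1} & -\frac{1}{\alpha_2\rho_2} \end{pmatrix}. \] Moreover $B$ is invertible with inverse \[ C=\begin{pmatrix} \frac1\rho & 0 & -\frac{\alpha_1}{\rho} & 0 & 0\\ 0 & 1 & 0 & 0 & 0\\ 0 & -1 & 1 & 0 & 0\\ 0 & c_2u_1+c_1u_2 & -c_1u_2 & c_1 & c_1c_2\rho\\ 0 & -(c_2u_1+c_1u_2) & c_1u_2 & c_2 & -c_1c_2\rho \end{pmatrix}, \] so equivalently $\zeta=C\xi$.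
   Context: For $i=1,2$, $p_i:(0,\infty)\to\mathbb{R}$ is smooth with $p_i'>0$; $\varphi_i$ is an antiderivative of $\rho\mapsto p_i(\rho)/\rho^2$ and $\Psi_i(\rho)=\varphi_i(\rho)+p_i(\rho)/\rho$ (so $\Psi_i'=p_i'/\rho$). Notation: $\alpha_2=1-\alpha_1$, $\rho=\alpha_1\rho_1+\alpha_2\rho_2$, $c_i=\alpha_i\rho_i/\rho$, $u=c_1u_1+c_2u_2$, $p_i=p_i(\rho_i)$. *)

theory Defs
  imports "HOL-Analysis.Analysis"
begin

definition dt :: "(real \<Rightarrow> real \<Rightarrow> real) \<Rightarrow> real \<Rightarrow> real \<Rightarrow> real" where
  "dt f t x = deriv (\<lambda>s. f s x) t"

definition dx :: "(real \<Rightarrow> real \<Rightarrow> real) \<Rightarrow> real \<Rightarrow> real \<Rightarrow> real" where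
  "dx f t x = deriv (\<lambda>y. f t y) x"

coinductive smooth2 :: "(real \<Rightarrow> real \<Rightarrow> real) \<Rightarrow> bool" where
  "(\<forall>z. (\<lambda>w. f (fst w) (snd w)) differentiable (at z)) \<Longrightarrow> smooth2 (dt f) \<Longrightarrow> smooth2 (dx f)
   \<Longrightarrow> smooth2 f"

coinductive smooth_on_real :: "real set \<Rightarrow> (real \<Rightarrow> real) \<Rightarrow> bool" for S where
  "(\<forall>r\<in>S. f differentiable (at r)) \<Longrightarrow> smooth_on_real S (deriv f) \<Longrightarrow> smooth_on_real S f"

definition Psi :: "(real \<Rightarrow> real) \<Rightarrow> (real \<Rightarrow> real) \<Rightarrow> real \<Rightarrow> real" where
  "Psi phi p r = phi r + p r / r"

definition BN_system ::
  "(real \<Rightarrow> real) \<Rightarrow> (real \<Rightarrow> real) \<Rightarrow>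
   (real \<Rightarrow> real \<Rightarrow> real) \<Rightarrow> (real \<Rightarrow> real \<Rightarrow> real) \<Rightarrow> (real \<Rightarrow> real \<Rightarrow> real) \<Rightarrow>
   (real \<Rightarrow> real \<Rightarrow> real) \<Rightarrow> (real \<Rightarrow> real \<Rightarrow> real) \<Rightarrow> (real \<Rightarrow> real \<Rightarrow> real^5) \<Rightarrow> bool" where
  "BN_system p1 p2 a1 r1 r2 u1 u2 \<zeta> \<longleftrightarrow>
    (let a2 = (\<lambda>t x. 1 - a1 t x);
         rho = (\<lambda>t x. a1 t x * r1 t x + a2 t x * r2 t x);
         u = (\<lambda>t x. (a1 t x * r1 t x * u1 t x + a2 t x * r2 t x * u2 t x) / rho t x);
         P1 = (\<lambda>t x. p1 (r1 t x));
         P2 = (\<lambda>t x. p2 (r2 t x));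
         uI = u;
         pI = (\<lambda>t x. (a2 t x * r2 t x * P1 t x + a1 t x * r1 t x * P2 t x) / rho t x)
     in \<forall>t x.
       dt a1 t x + uI t x * dx a1 t x = \<zeta> t x $ 1 \<and>
       dt (\<lambda>t x. a1 t x * r1 t x) t x + dx (\<lambda>t x. a1 t x * r1 t x * u1 t x) t x = \<zeta> t x $ 2 \<and>
       dt (\<lambda>t x. a2 t x * r2 t x) t x + dx (\<lambda>t x. a2 t x * r2 t x * u2 t x) t x = \<zeta> t x $ 3 \<and>
       dt (\<lambda>t x. a1 t x * r1 t x * u1 t x) t x
         + dx (\<lambda>t x. a1 t x * r1 t x * (u1 t x)\<^sup>2 + a1 t x * P1 t x) t x
         - pI t x * dx a1 t x = \<zeta> t x $ 4 \<and>
       dt (\<lambda>t x. a2 t x * r2 t x * u2 t x) t x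
         + dx (\<lambda>t x. a2 t x * r2 t x * (u2 t x)\<^sup>2 + a2 t x * P2 t x) t x
         - pI t x * dx a2 t x = \<zeta> t x $ 5)"

definition SHTC_system ::
  "(real \<Rightarrow> real) \<Rightarrow> (real \<Rightarrow> real) \<Rightarrow> (real \<Rightarrow> real) \<Rightarrow> (real \<Rightarrow> real) \<Rightarrow>
   (real \<Rightarrow> real \<Rightarrow> real) \<Rightarrow> (real \<Rightarrow> real \<Rightarrow> real) \<Rightarrow> (real \<Rightarrow> real \<Rightarrow> real) \<Rightarrow>
   (real \<Rightarrow> real \<Rightarrow> real) \<Rightarrow> (real \<Rightarrow> real \<Rightarrow> real) \<Rightarrow> (real \<Rightarrow> real \<Rightarrow> real^5) \<Rightarrow> bool" where
  "SHTC_system p1 p2 phi1 phi2 a1 r1 r2 u1 u2 \<xi> \<longleftrightarrow>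
    (let a2 = (\<lambda>t x. 1 - a1 t x);
         rho = (\<lambda>t x. a1 t x * r1 t x + a2 t x * r2 t x);
         u = (\<lambda>t x. (a1 t x * r1 t x * u1 t x + a2 t x * r2 t x * u2 t x) / rho t x);
         P1 = (\<lambda>t x. p1 (r1 t x));
         P2 = (\<lambda>t x. p2 (r2 t x))
     in \<forall>t x.
       dt (\<lambda>t x. a1 t x * rho t x) t x + dx (\<lambda>t x. a1 t x * rho t x * u t x) t x = \<xi> t x $ 1 \<and>
       dt (\<lambda>t x. a1 t x * r1 t x) t x + dx (\<lambda>t x. a1 t x * r1 t x * u1 t x) t x = \<xi> t x $ 2 \<and>
       dt rho t x + dx (\<lambda>t x. rho t x * u t x) t x = \<xi> t x $ 3 \<and>
       dt (\<lambda>t x. a1 t x * r1 t x * u1 t x + a2 t x * r2 t x * u2 t x) t x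
         + dx (\<lambda>t x. a1 t x * r1 t x * (u1 t x)\<^sup>2 + a2 t x * r2 t x * (u2 t x)\<^sup>2
                     + a1 t x * P1 t x + a2 t x * P2 t x) t x = \<xi> t x $ 4 \<and>
       dt (\<lambda>t x. u1 t x - u2 t x) t x
         + dx (\<lambda>t x. (u1 t x)\<^sup>2 / 2 - (u2 t x)\<^sup>2 / 2 + Psi phi1 p1 (r1 t x) - Psi phi2 p2 (r2 t x)) t x
         = \<xi> t x $ 5)"

definition Bmat :: "real \<Rightarrow> real \<Rightarrow> real \<Rightarrow> real \<Rightarrow> real \<Rightarrow> real^5^5" where
  "Bmat a1 r1 r2 u1 u2 =
    (let a2 = 1 - a1; rho = a1 * r1 + a2 * r2 in
     vector [vector [rho, a1, a1, 0, 0],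
             vector [0, 1, 0, 0, 0],
             vector [0, 1, 1, 0, 0],
             vector [0, 0, 0, 1, 1],
             vector [0, - u1 / (a1 * r1), u2 / (a2 * r2), 1 / (a1 * r1), - 1 / (a2 * r2)]])"

definition Cmat :: "real \<Rightarrow> real \<Rightarrow> real \<Rightarrow> real \<Rightarrow> real \<Rightarrow> real^5^5" where
  "Cmat a1 r1 r2 u1 u2 =
    (let a2 = 1 - a1; rho = a1 * r1 + a2 * r2; c1 = a1 * r1 / rho; c2 = a2 * r2 / rho in
     vector [vector [1 / rho, 0, - a1 / rho, 0, 0],
             vector [0, 1, 0, 0, 0],
             vector [0, -1, 1, 0, 0],
             vector [0, c2 * u1 + c1 * u2, - c1 * u2, c1, c1 * c2 * rho],
             vector [0, - (c2 * u1 + c1 * u2), c1 * u2, c2, - c1 * c2 * rho]])"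

end

theory Submission imports Defs begin

lemma exhaust_5:
  fixes x :: 5
  shows "x = 1 \<or> x = 2 \<or> x = 3 \<or> x = 4 \<or> x = 5"
proof (induct x)
  case (of_int z)
  then have "z = 0 \<or> z = 1 \<or> z = 2 \<or> z = 3 \<or> z = 4" by fastforce
  then show ?case by auto
qed

lemma forall_5: "(\<forall>i::5. P i) \<longleftrightarrow> P 1 \<and> P 2 \<and> P 3 \<and> P 4 \<and> P 5"
  by (metis exhaust_5)

lemma UNIV_5: "UNIV = {1, 2, 3, 4, 5::5}"
  using exhaust_5 by auto

lemma sum_5: "sum f (UNIV::5 set) = f 1 + f 2 + f 3 + f 4 + f 5"
  unfolding UNIV_5 by (simp add: ac_simps)

lemma vector_5 [simp]:
 "(vector [a,b,c,d,e] ::('a::zero)^5)$1 = a"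
 "(vector [a,b,c,d,e] ::('a::zero)^5)$2 = b"
 "(vector [a,b,c,d,e] ::('a::zero)^5)$3 = c"
 "(vector [a,b,c,d,e] ::('a::zero)^5)$4 = d"
 "(vector [a,b,c,d,e] ::('a::zero)^5)$5 = e"
  unfolding vector_def by simp_all

lemma dconst: "deriv (\<lambda>s. c) t = (0::real)" by simp
lemma difconst: "(\<lambda>s. c::real) differentiable at t" by simp

lemma DD: "(f::real\<Rightarrow>real) differentiable at t \<Longrightarrow> (f has_real_derivative deriv f t) (at t)"
  using DERIV_deriv_iff_real_differentiable by blast

lemma dadd: "(f::real\<Rightarrow>real) differentiable at t \<Longrightarrow> g differentiable at t \<Longrightarrow>
  deriv (\<lambda>s. f s + g s) t = deriv f t + deriv g t"
  by (rule DERIV_imp_deriv) (auto intro!: derivative_eq_intros DD)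
lemma dsub: "(f::real\<Rightarrow>real) differentiable at t \<Longrightarrow> g differentiable at t \<Longrightarrow>
  deriv (\<lambda>s. f s - g s) t = deriv f t - deriv g t"
  by (rule DERIV_imp_deriv) (auto intro!: derivative_eq_intros DD)
lemma dmult: "(f::real\<Rightarrow>real) differentiable at t \<Longrightarrow> g differentiable at t \<Longrightarrow>
  deriv (\<lambda>s. f s * g s) t = deriv f t * g t + f t * deriv g t"
  by (rule DERIV_imp_deriv) (auto intro!: derivative_eq_intros DD)
lemma ddiv: "(f::real\<Rightarrow>real) differentiable at t \<Longrightarrow> g differentiable at t \<Longrightarrow> g t \<noteq> 0 \<Longrightarrow>
  deriv (\<lambda>s. f s / g s) t = (deriv f t * g t - f t * deriv g t) / (g t)\<^sup>2"
  by (rule DERIV_imp_deriv) (auto intro!: derivative_eq_intros DD simp: power2_eq_square)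
lemma dsq: "(f::real\<Rightarrow>real) differentiable at t \<Longrightarrow>
  deriv (\<lambda>s. (f s)\<^sup>2) t = 2 * f t * deriv f t"
  by (rule DERIV_imp_deriv) (auto intro!: derivative_eq_intros DD)
lemma dcomp: "(p::real\<Rightarrow>real) differentiable at (g t) \<Longrightarrow> (g::real\<Rightarrow>real) differentiable at t \<Longrightarrow>
  deriv (\<lambda>s. p (g s)) t = deriv p (g t) * deriv g t"
  by (rule DERIV_imp_deriv) (auto intro!: DERIV_chain2[where f=p] DD)

lemma difadd: assumes a: "(f::real\<Rightarrow>real) differentiable at t" and b: "g differentiable at t" shows "(\<lambda>s. f s + g s) differentiable at t"
  using DERIV_add[OF DD[OF a] DD[OF b]] real_differentiable_def by blast
lemma difsub: assumes a: "(f::real\<Rightarrow>real) differentiable at t" and b: "g differentiable at t" shows "(\<lambda>s. f s - g s) differentiable at t"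
  using DERIV_diff[OF DD[OF a] DD[OF b]] real_differentiable_def by blast
lemma difmult: assumes a: "(f::real\<Rightarrow>real) differentiable at t" and b: "g differentiable at t" shows "(\<lambda>s. f s * g s) differentiable at t"
  using DERIV_mult[OF DD[OF a] DD[OF b]] real_differentiable_def by blast
lemma difdiv: assumes a: "(f::real\<Rightarrow>real) differentiable at t" and b: "g differentiable at t" and c: "g t \<noteq> 0" shows "(\<lambda>s. f s / g s) differentiable at t"
  using DERIV_divide[OF DD[OF a] DD[OF b] c] real_differentiable_def by blast
lemma difsq: "(f::real\<Rightarrow>real) differentiable at t \<Longrightarrow> (\<lambda>s. (f s)\<^sup>2) differentiable at t"
  using difmult[of f t f] by (simp add: power2_eq_square)
lemma difcomp: assumes a: "(p::real\<Rightarrow>real) differentiable at (g t)" and b: "(g::real\<Rightarrow>real) differentiable at t" shows "(\<lambda>s. p (g s)) differentiable at t"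
  using DERIV_chain2[OF DD[OF a] DD[OF b]] real_differentiable_def by blast


lemma smooth2_J: "smooth2 f \<Longrightarrow> (\<lambda>w. f (fst w) (snd w)) differentiable (at z)"
  by (erule smooth2.cases) blast

lemma smooth2_t: assumes "smooth2 f" shows "(\<lambda>s. f s x) differentiable at t"
proof -
  have "(\<lambda>s::real. (s, x)) differentiable at t" by (rule differentiable_Pair) simp_all
  then have "((\<lambda>w. f (fst w) (snd w)) \<circ> (\<lambda>s. (s, x))) differentiable at t"
    by (rule differentiable_chain_at) (rule smooth2_J[OF assms])
  then show ?thesis by (simp add: o_def)
qed
lemma smooth2_x: assumes "smooth2 f" shows "f t differentiable at x"
proof -
  have "(\<lambda>s::real. (t, s)) differentiable at x" by (rule differentiable_Pair) simp_all
  then have "((\<lambda>w. f (fst w) (snd w)) \<circ> (\<lambda>s. (t, s))) differentiable at x"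
    by (rule differentiable_chain_at) (rule smooth2_J[OF assms])
  then show ?thesis by (simp add: o_def)
qed

lemma son: "smooth_on_real S p \<Longrightarrow> r \<in> S \<Longrightarrow> p differentiable at r"
  by (erule smooth_on_real.cases) blast

definition ZBN ::
  "(real \<Rightarrow> real) \<Rightarrow> (real \<Rightarrow> real) \<Rightarrow>
   (real \<Rightarrow> real \<Rightarrow> real) \<Rightarrow> (real \<Rightarrow> real \<Rightarrow> real) \<Rightarrow> (real \<Rightarrow> real \<Rightarrow> real) \<Rightarrow>
   (real \<Rightarrow> real \<Rightarrow> real) \<Rightarrow> (real \<Rightarrow> real \<Rightarrow> real) \<Rightarrow> real \<Rightarrow> real \<Rightarrow> real^5" where
  "ZBN p1 p2 a1 r1 r2 u1 u2 t x =
    (let a2 = (\<lambda>t x. 1 - a1 t x);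
         rho = (\<lambda>t x. a1 t x * r1 t x + a2 t x * r2 t x);
         u = (\<lambda>t x. (a1 t x * r1 t x * u1 t x + a2 t x * r2 t x * u2 t x) / rho t x);
         P1 = (\<lambda>t x. p1 (r1 t x));
         P2 = (\<lambda>t x. p2 (r2 t x));
         uI = u;
         pI = (\<lambda>t x. (a2 t x * r2 t x * P1 t x + a1 t x * r1 t x * P2 t x) / rho t x)
     in vector [
       dt a1 t x + uI t x * dx a1 t x,
       dt (\<lambda>t x. a1 t x * r1 t x) t x + dx (\<lambda>t x. a1 t x * r1 t x * u1 t x) t x,
       dt (\<lambda>t x. a2 t x * r2 t x) t x + dx (\<lambda>t x. a2 t x * r2 t x * u2 t x) t x,
       dt (\<lambda>t x. a1 t x * r1 t x * u1 t x) t x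
         + dx (\<lambda>t x. a1 t x * r1 t x * (u1 t x)\<^sup>2 + a1 t x * P1 t x) t x
         - pI t x * dx a1 t x,
       dt (\<lambda>t x. a2 t x * r2 t x * u2 t x) t x
         + dx (\<lambda>t x. a2 t x * r2 t x * (u2 t x)\<^sup>2 + a2 t x * P2 t x) t x
         - pI t x * dx a2 t x])"

definition XS ::
  "(real \<Rightarrow> real) \<Rightarrow> (real \<Rightarrow> real) \<Rightarrow> (real \<Rightarrow> real) \<Rightarrow> (real \<Rightarrow> real) \<Rightarrow>
   (real \<Rightarrow> real \<Rightarrow> real) \<Rightarrow> (real \<Rightarrow> real \<Rightarrow> real) \<Rightarrow> (real \<Rightarrow> real \<Rightarrow> real) \<Rightarrow>
   (real \<Rightarrow> real \<Rightarrow> real) \<Rightarrow> (real \<Rightarrow> real \<Rightarrow> real) \<Rightarrow> real \<Rightarrow> real \<Rightarrow> real^5" where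
  "XS p1 p2 phi1 phi2 a1 r1 r2 u1 u2 t x =
    (let a2 = (\<lambda>t x. 1 - a1 t x);
         rho = (\<lambda>t x. a1 t x * r1 t x + a2 t x * r2 t x);
         u = (\<lambda>t x. (a1 t x * r1 t x * u1 t x + a2 t x * r2 t x * u2 t x) / rho t x);
         P1 = (\<lambda>t x. p1 (r1 t x));
         P2 = (\<lambda>t x. p2 (r2 t x))
     in vector [
       dt (\<lambda>t x. a1 t x * rho t x) t x + dx (\<lambda>t x. a1 t x * rho t x * u t x) t x,
       dt (\<lambda>t x. a1 t x * r1 t x) t x + dx (\<lambda>t x. a1 t x * r1 t x * u1 t x) t x,
       dt rho t x + dx (\<lambda>t x. rho t x * u t x) t x,
       dt (\<lambda>t x. a1 t x * r1 t x * u1 t x + a2 t x * r2 t x * u2 t x) t x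
         + dx (\<lambda>t x. a1 t x * r1 t x * (u1 t x)\<^sup>2 + a2 t x * r2 t x * (u2 t x)\<^sup>2
                     + a1 t x * P1 t x + a2 t x * P2 t x) t x,
       dt (\<lambda>t x. u1 t x - u2 t x) t x
         + dx (\<lambda>t x. (u1 t x)\<^sup>2 / 2 - (u2 t x)\<^sup>2 / 2 + Psi phi1 p1 (r1 t x) - Psi phi2 p2 (r2 t x)) t x
        ])"


lemma key:
  fixes p1 p2 phi1 phi2 :: "real \<Rightarrow> real"
    and a1 r1 r2 u1 u2 :: "real \<Rightarrow> real \<Rightarrow> real"
  assumes p1d: "\<And>t x. p1 differentiable at (r1 t x)" and p2d: "\<And>t x. p2 differentiable at (r2 t x)"
    and f1d: "\<And>t x. phi1 differentiable at (r1 t x)" and f2d: "\<And>t x. phi2 differentiable at (r2 t x)"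
    and f1: "\<And>t x. deriv phi1 (r1 t x) = p1 (r1 t x) / (r1 t x)\<^sup>2"
    and f2: "\<And>t x. deriv phi2 (r2 t x) = p2 (r2 t x) / (r2 t x)\<^sup>2"
    and nz: "\<And>t x. a1 t x * r1 t x + (1 - a1 t x) * r2 t x \<noteq> 0"
      "\<And>t x. r1 t x \<noteq> 0" "\<And>t x. r2 t x \<noteq> 0" "\<And>t x. a1 t x \<noteq> 0" "\<And>t x. 1 - a1 t x \<noteq> 0"
    and dta: "\<And>t x. (\<lambda>s. a1 s x) differentiable at t" "\<And>t x. (\<lambda>s. r1 s x) differentiable at t"
       "\<And>t x. (\<lambda>s. r2 s x) differentiable at t" "\<And>t x. (\<lambda>s. u1 s x) differentiable at t"
       "\<And>t x. (\<lambda>s. u2 s x) differentiable at t"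
    and dxa: "\<And>t x. a1 t differentiable at x" "\<And>t x. r1 t differentiable at x"
       "\<And>t x. r2 t differentiable at x" "\<And>t x. u1 t differentiable at x"
       "\<And>t x. u2 t differentiable at x"
  shows "XS p1 p2 phi1 phi2 a1 r1 r2 u1 u2 t x
     = Bmat (a1 t x) (r1 t x) (r2 t x) (u1 t x) (u2 t x) *v ZBN p1 p2 a1 r1 r2 u1 u2 t x"
proof -
  define R where "R = a1 t x * r1 t x + (1 - a1 t x) * r2 t x"
  have R: "R \<noteq> 0" using nz(1) unfolding R_def by blast
  define Q where "Q = 1 - a1 t x"
  have Q: "Q \<noteq> 0" using nz(5) unfolding Q_def by blast
  have n: "r1 t x \<noteq> 0" "r2 t x \<noteq> 0" "a1 t x \<noteq> 0" "1 - a1 t x \<noteq> 0" "a1 t x \<noteq> 1" using nz by auto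
  show ?thesis
  unfolding XS_def ZBN_def Bmat_def Let_def dt_def dx_def Psi_def
  apply (simp only: vec_eq_iff forall_5 matrix_vector_mult_def sum_5 vec_lambda_beta vector_5)
  apply (simp only: dadd dsub dmult ddiv dsq dcomp[of p1] dcomp[of p2] dcomp[of phi1] dcomp[of phi2] dconst
     difadd difsub difmult difdiv difsq difcomp[of p1] difcomp[of p2] difcomp[of phi1] difcomp[of phi2] difconst
     p1d p2d f1d f2d nz dta dxa not_False_eq_True zero_neq_numeral[symmetric] f1 f2 simp_thms)
  apply (simp only: R_def[symmetric])
  apply (simp only: Q_def[symmetric])
  apply (intro conjI)
  apply (simp_all add: field_simps power2_eq_square R Q n)
  apply (simp_all add: R_def Q_def algebra_simps)
  done
qed

lemma BC:
  assumes "0 < a1" "a1 < 1" "0 < r1" "0 < r2"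
  shows "Bmat a1 r1 r2 u1 u2 ** Cmat a1 r1 r2 u1 u2 = mat 1 \<and> Cmat a1 r1 r2 u1 u2 ** Bmat a1 r1 r2 u1 u2 = mat 1"
proof -
  define R where "R = a1 * r1 + (1 - a1) * r2"
  have "R > 0" using assms unfolding R_def by (simp add: add_pos_pos)
  then have n: "R \<noteq> 0" "1 - a1 \<noteq> 0" "a1 \<noteq> 0" "r1 \<noteq> 0" "r2 \<noteq> 0" "a1 \<noteq> 1" using assms by auto
  show ?thesis
  unfolding Bmat_def Cmat_def Let_def R_def[symmetric]
  apply (simp only: matrix_matrix_mult_def mat_def vec_eq_iff forall_5 sum_5 vec_lambda_beta vector_5)
  apply (simp add: n)
  apply (simp add: n field_simps)
  apply (simp add: R_def algebra_simps)
  done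
qed



lemma BN_iff: "BN_system p1 p2 a1 r1 r2 u1 u2 \<zeta> \<longleftrightarrow> (\<forall>t x. ZBN p1 p2 a1 r1 r2 u1 u2 t x = \<zeta> t x)"
  unfolding BN_system_def ZBN_def Let_def by (simp only: vec_eq_iff forall_5 vector_5)

lemma SHTC_iff: "SHTC_system p1 p2 phi1 phi2 a1 r1 r2 u1 u2 \<xi> \<longleftrightarrow> (\<forall>t x. XS p1 p2 phi1 phi2 a1 r1 r2 u1 u2 t x = \<xi> t x)"
  unfolding SHTC_system_def XS_def Let_def by (simp only: vec_eq_iff forall_5 vector_5)

theorem mainTheorem5:
  fixes p1 p2 phi1 phi2 :: "real \<Rightarrow> real"
    and a1 r1 r2 u1 u2 :: "real \<Rightarrow> real \<Rightarrow> real"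
    and \<zeta> :: "real \<Rightarrow> real \<Rightarrow> real^5"
  assumes p1_smooth: "smooth_on_real {0<..} p1" and p2_smooth: "smooth_on_real {0<..} p2"
    and p1_mono: "\<forall>r>0. deriv p1 r > 0" and p2_mono: "\<forall>r>0. deriv p2 r > 0"
    and phi1: "\<forall>r>0. (phi1 has_real_derivative p1 r / r\<^sup>2) (at r)"
    and phi2: "\<forall>r>0. (phi2 has_real_derivative p2 r / r\<^sup>2) (at r)"
    and a1_range: "\<forall>t x. 0 < a1 t x \<and> a1 t x < 1"
    and r1_pos: "\<forall>t x. 0 < r1 t x" and r2_pos: "\<forall>t x. 0 < r2 t x"
    and smooth: "smooth2 a1" "smooth2 r1" "smooth2 r2" "smooth2 u1" "smooth2 u2"
  shows "(BN_system p1 p2 a1 r1 r2 u1 u2 \<zeta> \<longleftrightarrow>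
          SHTC_system p1 p2 phi1 phi2 a1 r1 r2 u1 u2
            (\<lambda>t x. Bmat (a1 t x) (r1 t x) (r2 t x) (u1 t x) (u2 t x) *v \<zeta> t x))
       \<and> (\<forall>t x. Bmat (a1 t x) (r1 t x) (r2 t x) (u1 t x) (u2 t x)
                  ** Cmat (a1 t x) (r1 t x) (r2 t x) (u1 t x) (u2 t x) = mat 1
             \<and> Cmat (a1 t x) (r1 t x) (r2 t x) (u1 t x) (u2 t x)
                  ** Bmat (a1 t x) (r1 t x) (r2 t x) (u1 t x) (u2 t x) = mat 1)
       \<and> (\<forall>t x. \<zeta> t x = Cmat (a1 t x) (r1 t x) (r2 t x) (u1 t x) (u2 t x)
                   *v (Bmat (a1 t x) (r1 t x) (r2 t x) (u1 t x) (u2 t x) *v \<zeta> t x))"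
proof -
  let ?B = "\<lambda>t x. Bmat (a1 t x) (r1 t x) (r2 t x) (u1 t x) (u2 t x)"
  let ?C = "\<lambda>t x. Cmat (a1 t x) (r1 t x) (r2 t x) (u1 t x) (u2 t x)"
  have inv: "\<And>t x. ?B t x ** ?C t x = mat 1 \<and> ?C t x ** ?B t x = mat 1"
    using BC a1_range r1_pos r2_pos by blast
  have CB: "\<And>t x v. ?C t x *v (?B t x *v v) = v"
    using inv by (simp add: matrix_vector_mul_assoc)
  have pos: "\<And>t x. a1 t x * r1 t x + (1 - a1 t x) * r2 t x > 0"
    using a1_range r1_pos r2_pos by (simp add: add_pos_pos)
  have K: "\<And>t x. XS p1 p2 phi1 phi2 a1 r1 r2 u1 u2 t x = ?B t x *v ZBN p1 p2 a1 r1 r2 u1 u2 t x"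
  proof (rule key)
    show "\<And>t x. p1 differentiable at (r1 t x)" using son[OF p1_smooth] r1_pos by simp
    show "\<And>t x. p2 differentiable at (r2 t x)" using son[OF p2_smooth] r2_pos by simp
    show "\<And>t x. phi1 differentiable at (r1 t x)" using phi1 r1_pos real_differentiable_def by blast
    show "\<And>t x. phi2 differentiable at (r2 t x)" using phi2 r2_pos real_differentiable_def by blast
    show "\<And>t x. deriv phi1 (r1 t x) = p1 (r1 t x) / (r1 t x)\<^sup>2" using phi1 r1_pos DERIV_imp_deriv by blast
    show "\<And>t x. deriv phi2 (r2 t x) = p2 (r2 t x) / (r2 t x)\<^sup>2" using phi2 r2_pos DERIV_imp_deriv by blast
    show "\<And>t x. a1 t x * r1 t x + (1 - a1 t x) * r2 t x \<noteq> 0" using pos by (metis less_irrefl)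
    show "\<And>t x. r1 t x \<noteq> 0" "\<And>t x. r2 t x \<noteq> 0" "\<And>t x. a1 t x \<noteq> 0"
      using r1_pos r2_pos a1_range by (metis less_irrefl)+
    show "\<And>t x. 1 - a1 t x \<noteq> 0"
    proof -
      fix t x show "1 - a1 t x \<noteq> 0" using a1_range[rule_format, of t x] by simp
    qed
    show "\<And>t x. (\<lambda>s. a1 s x) differentiable at t" "\<And>t x. (\<lambda>s. r1 s x) differentiable at t"
       "\<And>t x. (\<lambda>s. r2 s x) differentiable at t" "\<And>t x. (\<lambda>s. u1 s x) differentiable at t"
       "\<And>t x. (\<lambda>s. u2 s x) differentiable at t"
      using smooth by (auto intro: smooth2_t)
    show "\<And>t x. a1 t differentiable at x" "\<And>t x. r1 t differentiable at x"
       "\<And>t x. r2 t differentiable at x" "\<And>t x. u1 t differentiable at x"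
       "\<And>t x. u2 t differentiable at x"
      using smooth by (auto intro: smooth2_x)
  qed
  have P1: "BN_system p1 p2 a1 r1 r2 u1 u2 \<zeta> \<longleftrightarrow>
          SHTC_system p1 p2 phi1 phi2 a1 r1 r2 u1 u2 (\<lambda>t x. ?B t x *v \<zeta> t x)"
    unfolding BN_iff SHTC_iff K
  proof
    assume "\<forall>t x. ZBN p1 p2 a1 r1 r2 u1 u2 t x = \<zeta> t x"
    then show "\<forall>t x. ?B t x *v ZBN p1 p2 a1 r1 r2 u1 u2 t x = ?B t x *v \<zeta> t x" by simp
  next
    assume h: "\<forall>t x. ?B t x *v ZBN p1 p2 a1 r1 r2 u1 u2 t x = ?B t x *v \<zeta> t x"
    show "\<forall>t x. ZBN p1 p2 a1 r1 r2 u1 u2 t x = \<zeta> t x"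
    proof (intro allI)
      fix t x
      have "?C t x *v (?B t x *v ZBN p1 p2 a1 r1 r2 u1 u2 t x) = ?C t x *v (?B t x *v \<zeta> t x)"
        using h by simp
      then show "ZBN p1 p2 a1 r1 r2 u1 u2 t x = \<zeta> t x" by (simp only: CB)
    qed
  qed
  show ?thesis using P1 inv CB by simp
qed

end
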